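(* Let $F_1$ and $F_2$ be finite fields with $|F_1|\le|F_2|$ and $\mathrm{char}(F_1)=2$. Then there exists a $(|F_1|-1)\times(|F_2|-1)$ Latin-sum array, with rows indexed by $A=F_1\setminus\{0\}$ and columns indexed by $B=F_2\setminus\{0\}$, over the alphabet $F_2\setminus\{0\}$.
   Context: Let $F_1,F_2$ be finite fields with $|F_1|\le|F_2|$, and let $A\subseteq F_1$, $B\subseteq F_2$ with $|A|\le|B|$. A table $L$ of size $|A|\times|B|$ with entries from a set $C$, whose rows are indexed by the elements of $A$ and columns by the elements of $B$ (entry $L_{x,y}$), is called a Latin-sum array over $C$ if for every two distinct pairs $(x_1,y_1),(x_2,y_2)\in A\times B$: (i) if $x_1+x_2=0$ in $F_1$ then $L_{x_1,y_1}\ne L_{x_2,y_2}$; and (ii) if $y_1+y_2=0$ in $F_2$ then $L_{x_1,y_1}\ne L_{x_2,y_2}$. *)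

theory Defs
  imports Main
begin

definition latin_sum_array ::
  "'a::field set \<Rightarrow> 'b::field set \<Rightarrow> 'c set \<Rightarrow> ('a \<Rightarrow> 'b \<Rightarrow> 'c) \<Rightarrow> bool" where
  "latin_sum_array A B C L \<longleftrightarrow>
     (\<forall>x\<in>A. \<forall>y\<in>B. L x y \<in> C) \<and>
     (\<forall>x1\<in>A. \<forall>y1\<in>B. \<forall>x2\<in>A. \<forall>y2\<in>B. (x1, y1) \<noteq> (x2, y2) \<longrightarrow>
        ((x1 + x2 = 0 \<longrightarrow> L x1 y1 \<noteq> L x2 y2) \<and>
         (y1 + y2 = 0 \<longrightarrow> L x1 y1 \<noteq> L x2 y2)))"

end

theory Submission
  imports Defs
begin

lemma char2_neg: assumes "(1::'a::field) + 1 = 0" and "(x1::'a) + x2 = 0" shows "x1 = x2"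
proof -
  have "x2 + x2 = (1+1) * x2" by (simp add: distrib_right)
  hence "x2 + x2 = 0" using assms(1) by simp
  thus ?thesis using assms(2) by (metis add_right_cancel)
qed

theorem lemma18:
  assumes "card (UNIV :: ('a::{field,finite}) set) \<le> card (UNIV :: ('b::{field,finite}) set)"
    and "(1::'a) + 1 = 0"
  shows "\<exists>L :: 'a \<Rightarrow> 'b \<Rightarrow> 'b.
           latin_sum_array (UNIV - {0::'a}) (UNIV - {0::'b}) (UNIV - {0::'b}) L"
proof (cases "(1::'b) + 1 = 0")
  case True
  have "card (UNIV - {0::'a}) \<le> card (UNIV - {0::'b})"
    using assms(1) by (simp add: card_Diff_singleton)
  then obtain f where f: "f ` (UNIV - {0::'a}) \<subseteq> (UNIV - {0::'b})" "inj_on f (UNIV - {0::'a})"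
    using card_le_inj[of "UNIV - {0::'a}" "UNIV - {0::'b}"] by auto
  have "latin_sum_array (UNIV - {0::'a}) (UNIV - {0::'b}) (UNIV - {0::'b}) (\<lambda>x y. f x * y)"
    unfolding latin_sum_array_def
  proof (intro conjI ballI impI)
    fix x y assume "x \<in> UNIV - {0::'a}" "y \<in> UNIV - {0::'b}"
    thus "f x * y \<in> UNIV - {0}" using f(1) by auto
  next
    fix x1 y1 x2 y2 assume h: "x1 \<in> UNIV - {0::'a}" "y1 \<in> UNIV - {0::'b}"
      "x2 \<in> UNIV - {0::'a}" "y2 \<in> UNIV - {0::'b}" "(x1, y1) \<noteq> (x2, y2)"
    {
      assume "x1 + x2 = 0"
      hence "x1 = x2" using char2_neg assms(2) by blast
      with h have "y1 \<noteq> y2" by auto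
      moreover have "f x1 \<noteq> 0" using f(1) h by auto
      ultimately show "f x1 * y1 \<noteq> f x2 * y2" using \<open>x1 = x2\<close> by simp
    }
    {
      assume "y1 + y2 = 0"
      hence "y1 = y2" using char2_neg True by blast
      with h have "x1 \<noteq> x2" by auto
      hence "f x1 \<noteq> f x2" using f(2) h by (auto dest: inj_onD)
      thus "f x1 * y1 \<noteq> f x2 * y2" using \<open>y1 = y2\<close> h by simp
    }
  qed
  thus ?thesis by blast
next
  case False
  have "latin_sum_array (UNIV - {0::'a}) (UNIV - {0::'b}) (UNIV - {0::'b}) (\<lambda>x y. y)"
    unfolding latin_sum_array_def
  proof (intro conjI ballI impI)
    fix x1 y1 x2 y2 assume h: "x1 \<in> UNIV - {0::'a}" "y1 \<in> UNIV - {0::'b}"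
      "x2 \<in> UNIV - {0::'a}" "y2 \<in> UNIV - {0::'b}" "(x1, y1) \<noteq> (x2, y2)"
    {
      assume "x1 + x2 = 0"
      hence "x1 = x2" using char2_neg assms(2) by blast
      with h show "y1 \<noteq> y2" by auto
    }
    {
      assume s: "y1 + y2 = 0"
      show "y1 \<noteq> y2"
      proof
        assume "y1 = y2"
        hence "(1+1) * y2 = 0" using s by (simp add: distrib_right)
        thus False using False h by simp
      qed
    }
  qed simp
  thus ?thesis by blast
qed

end
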